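(* Let $K$ be any field, $R=K[x_1,\dots,x_5]$ and $I=(x_1x_3,\ x_1x_4,\ x_2x_4,\ x_2x_5,\ x_3x_5)$. Then $$I=\sqrt{(x_1x_3,\ x_1x_4+x_2x_5,\ x_2x_4+x_3x_5)},$$ and $\operatorname{ara} I=3$; in particular $I$ is a set-theoretic complete intersection.
   Context: The arithmetical rank $\operatorname{ara} I$ of an ideal $I$ is the minimum number of elements of $R$ generating an ideal with the same radical as $I$. An ideal is a set-theoretic complete intersection if its arithmetical rank equals its height. $I$ has (pure) height 3. *)

theory Defs
  imports "HOL-Computational_Algebra.Polynomial"
begin

definition is_ideal :: "'a::comm_ring_1 set \<Rightarrow> bool" where
  "is_ideal J \<longleftrightarrow> 0 \<in> J \<and> (\<forall>a\<in>J. \<forall>b\<in>J. a + b \<in> J) \<and> (\<forall>r. \<forall>a\<in>J. r * a \<in> J)"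

definition ideal_gen :: "'a::comm_ring_1 set \<Rightarrow> 'a set" where
  "ideal_gen S = \<Inter>{J. is_ideal J \<and> S \<subseteq> J}"

definition rad :: "'a::comm_ring_1 set \<Rightarrow> 'a set" where
  "rad J = {x. \<exists>n::nat. x ^ n \<in> J}"

definition ara :: "'a::comm_ring_1 set \<Rightarrow> nat" where
  "ara I = (LEAST n. \<exists>gs::'a list. length gs = n \<and> rad (ideal_gen (set gs)) = rad I)"

text \<open>The polynomial ring K[x1,...,x5] rendered as the iterated ring
  K[x1][x2][x3][x4][x5]; x1 is the innermost variable.\<close>
type_synonym 'a mpoly5 = "'a poly poly poly poly poly"

definition X1 :: "'a::field mpoly5" where "X1 = [:[:[:[:[:0, 1:]:]:]:]:]"
definition X2 :: "'a::field mpoly5" where "X2 = [:[:[:[:0, 1:]:]:]:]"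
definition X3 :: "'a::field mpoly5" where "X3 = [:[:[:0, 1:]:]:]"
definition X4 :: "'a::field mpoly5" where "X4 = [:[:0, 1:]:]"
definition X5 :: "'a::field mpoly5" where "X5 = [:0, 1:]"

end

theory Submission
  imports Defs "Jordan_Normal_Form.Determinant"
begin

lemma ideal_gen_ideal: "is_ideal (ideal_gen S)"
  unfolding ideal_gen_def is_ideal_def by auto

lemma ideal_gen_sub: "S \<subseteq> ideal_gen S"
  unfolding ideal_gen_def by auto

lemma ideal_gen_least: "is_ideal J \<Longrightarrow> S \<subseteq> J \<Longrightarrow> ideal_gen S \<subseteq> J"
  unfolding ideal_gen_def by auto

lemma ideal_gen_mono: "S \<subseteq> T \<Longrightarrow> ideal_gen S \<subseteq> ideal_gen T"
  by (meson ideal_gen_ideal ideal_gen_least ideal_gen_sub order_trans)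

lemma idealD:
  assumes "is_ideal J"
  shows "0 \<in> J" "a \<in> J \<Longrightarrow> b \<in> J \<Longrightarrow> a + b \<in> J" "a \<in> J \<Longrightarrow> r * a \<in> J"
    "a \<in> J \<Longrightarrow> a * r \<in> J" "a \<in> J \<Longrightarrow> - a \<in> J" "a \<in> J \<Longrightarrow> b \<in> J \<Longrightarrow> a - b \<in> J"
proof -
  have m: "x \<in> J \<Longrightarrow> s * x \<in> J" for s x using assms unfolding is_ideal_def by auto
  have ad: "x \<in> J \<Longrightarrow> y \<in> J \<Longrightarrow> x + y \<in> J" for x y using assms unfolding is_ideal_def by auto
  have ng: "x \<in> J \<Longrightarrow> - x \<in> J" for x using m[of x "-1"] by simp
  show "0 \<in> J" using assms unfolding is_ideal_def by auto
  show "a \<in> J \<Longrightarrow> b \<in> J \<Longrightarrow> a + b \<in> J" using ad by auto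
  show "a \<in> J \<Longrightarrow> r * a \<in> J" using m by auto
  show "a \<in> J \<Longrightarrow> a * r \<in> J" using m[of a r] by (simp add: mult.commute)
  show "a \<in> J \<Longrightarrow> - a \<in> J" using ng by auto
  show "a \<in> J \<Longrightarrow> b \<in> J \<Longrightarrow> a - b \<in> J"
    using ng[of b] ad[of a "-b"] by simp
qed

lemma ideal_sum: "is_ideal J \<Longrightarrow> (\<And>i. i \<in> A \<Longrightarrow> f i \<in> J) \<Longrightarrow> sum f A \<in> J"
  by (induction A rule: infinite_finite_induct) (auto intro: idealD(1,2))

lemma ideal_power: "is_ideal J \<Longrightarrow> a \<in> J \<Longrightarrow> n > 0 \<Longrightarrow> a ^ n \<in> J"
  by (cases n) (auto intro: idealD(4))

lemma ideal2: "ideal_gen {f, g} = {u * f + v * g | u v. True}"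
proof
  have "is_ideal {u * f + v * g | u v. True}"
    unfolding is_ideal_def
  proof (intro conjI ballI allI)
    show "0 \<in> {u * f + v * g |u v. True}" by (rule CollectI, rule exI[of _ 0], rule exI[of _ 0]) simp
    fix a b assume "a \<in> {u * f + v * g |u v. True}" "b \<in> {u * f + v * g |u v. True}"
    then obtain u v u' v' where "a = u * f + v * g" "b = u' * f + v' * g" by auto
    then show "a + b \<in> {u * f + v * g |u v. True}"
      by (intro CollectI exI[of _ "u + u'"] exI[of _ "v + v'"]) (simp add: algebra_simps)
  next
    fix r a assume "a \<in> {u * f + v * g |u v. True}"
    then obtain u v where "a = u * f + v * g" by auto
    then show "r * a \<in> {u * f + v * g |u v. True}"
      by (intro CollectI exI[of _ "r * u"] exI[of _ "r * v"]) (simp add: algebra_simps)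
  qed
  moreover have "f \<in> {u * f + v * g | u v. True}"
    by (rule CollectI, rule exI[of _ 1], rule exI[of _ 0]) simp
  moreover have "g \<in> {u * f + v * g | u v. True}"
    by (rule CollectI, rule exI[of _ 0], rule exI[of _ 1]) simp
  ultimately have "is_ideal {u * f + v * g | u v. True}" "{f, g} \<subseteq> {u * f + v * g | u v. True}"
    by blast+
  then show "ideal_gen {f, g} \<subseteq> {u * f + v * g | u v. True}"
    by (rule ideal_gen_least)
next
  show "{u * f + v * g | u v. True} \<subseteq> ideal_gen {f, g}"
    using ideal_gen_ideal[of "{f,g}"] ideal_gen_sub[of "{f,g}"]
    by (auto intro!: idealD(2,3))
qed

lemma rad_sub: "is_ideal J \<Longrightarrow> J \<subseteq> rad J"
  unfolding rad_def by (auto intro!: exI[of _ 1])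

lemma rad_mono: "J \<subseteq> L \<Longrightarrow> rad J \<subseteq> rad L"
  unfolding rad_def by auto

lemma rad_ideal:
  assumes J: "is_ideal J"
  shows "is_ideal (rad J)"
  unfolding is_ideal_def
proof (intro conjI ballI allI)
  show "0 \<in> rad J" unfolding rad_def using idealD(1)[OF J] by (auto intro!: exI[of _ 1])
next
  fix r a assume "a \<in> rad J"
  then obtain n where "a ^ n \<in> J" unfolding rad_def by auto
  then have "(r * a) ^ n \<in> J" using idealD(3)[OF J, of "a^n" "r^n"] by (simp add: power_mult_distrib)
  then show "r * a \<in> rad J" unfolding rad_def by auto
next
  fix a b assume "a \<in> rad J" "b \<in> rad J"
  then obtain m n where m: "a ^ m \<in> J" and n: "b ^ n \<in> J" unfolding rad_def by auto
  have "(a + b) ^ (m + n) = (\<Sum>k\<le>m+n. of_nat ((m + n) choose k) * a ^ k * b ^ (m + n - k))"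
    by (rule binomial_ring)
  also have "\<dots> \<in> J"
  proof (rule ideal_sum[OF J])
    fix k assume "k \<in> {..m+n}"
    show "of_nat ((m + n) choose k) * a ^ k * b ^ (m + n - k) \<in> J"
    proof (cases "k \<ge> m")
      case True
      then have "a ^ k = a ^ m * a ^ (k - m)" by (simp add: power_add[symmetric])
      then show ?thesis using idealD(3,4)[OF J] m by (simp add: mult.assoc)
    next
      case False
      then have "b ^ (m + n - k) = b ^ n * b ^ (m - k)"
        using False by (simp add: power_add[symmetric] add.commute)
      then show ?thesis using idealD(3,4)[OF J] n by (simp add: mult.assoc)
    qed
  qed
  finally show "a + b \<in> rad J" unfolding rad_def by auto
qed

lemma rad_rad: "rad (rad J) = rad J"
proof
  show "rad (rad J) \<subseteq> rad J"
  proof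
    fix x assume "x \<in> rad (rad J)"
    then obtain n m where "(x ^ n) ^ m \<in> J" unfolding rad_def by auto
    then have "x ^ (n * m) \<in> J" by (simp add: power_mult)
    then show "x \<in> rad J" unfolding rad_def by auto
  qed
  show "rad J \<subseteq> rad (rad J)"
  proof
    fix x assume "x \<in> rad J"
    then have "x ^ 1 \<in> rad J" by simp
    then show "x \<in> rad (rad J)" unfolding rad_def[of "rad J"] by blast
  qed
qed

lemma rad_ideal_gen_sub: "S \<subseteq> rad J \<Longrightarrow> is_ideal J \<Longrightarrow> rad (ideal_gen S) \<subseteq> rad J"
  by (metis ideal_gen_least rad_ideal rad_mono rad_rad)

definition rhom :: "('a::comm_ring_1 \<Rightarrow> 'b::comm_ring_1) \<Rightarrow> bool" where
  "rhom h \<longleftrightarrow> h 1 = 1 \<and> (\<forall>x y. h (x + y) = h x + h y) \<and> (\<forall>x y. h (x * y) = h x * h y)"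

lemma rhomD:
  assumes "rhom h"
  shows "h 1 = 1" "h (x + y) = h x + h y" "h (x * y) = h x * h y" "h 0 = 0"
    "h (- x) = - h x" "h (x - y) = h x - h y" "h (x ^ n) = h x ^ n"
proof -
  show o1: "h 1 = 1" and "h (x + y) = h x + h y" and "h (x * y) = h x * h y"
    using assms unfolding rhom_def by auto
  have a2: "h (a + b) = h a + h b" for a b using assms unfolding rhom_def by auto
  have m3: "h (a * b) = h a * h b" for a b using assms unfolding rhom_def by auto
  show z0: "h 0 = 0" using a2[of 0 0] by simp
  have "h x + h (- x) = 0" using a2[of x "-x"] z0 by simp
  then show ng: "h (- x) = - h x" by (metis add.inverse_unique)
  have "h (- y) = - h y" using a2[of y "-y"] z0 by (simp add: add.inverse_unique)
  then show "h (x - y) = h x - h y" using a2[of x "-y"] by simp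
  show "h (x ^ n) = h x ^ n" by (induction n) (auto simp: o1 m3)
qed

lemma rhom_sum: "rhom h \<Longrightarrow> h (sum f A) = (\<Sum>i\<in>A. h (f i))"
  by (induction A rule: infinite_finite_induct) (auto simp: rhomD)

lemma rhom_comp: "rhom h \<Longrightarrow> rhom g \<Longrightarrow> rhom (g \<circ> h)"
  unfolding rhom_def by auto

lemma rhom_poly: "rhom (\<lambda>p. poly p c)"
  unfolding rhom_def by auto

lemma rhom_map_poly:
  assumes h: "rhom h"
  shows "rhom (map_poly h)"
  unfolding rhom_def
proof (intro conjI allI)
  show "map_poly h 1 = 1" using rhomD(1)[OF h] by simp
  fix p q
  show "map_poly h (p + q) = map_poly h p + map_poly h q"
    by (rule poly_eqI) (simp add: coeff_map_poly rhomD[OF h])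
  show "map_poly h (p * q) = map_poly h p * map_poly h q"
    by (rule poly_eqI) (simp add: coeff_map_poly rhomD[OF h] coeff_mult rhom_sum[OF h])
qed

lemma rhom_const: "rhom (\<lambda>a. [:a:])"
  unfolding rhom_def by auto

lemma rhom_image:
  assumes h: "rhom h" and x: "x \<in> ideal_gen S"
  shows "h x \<in> ideal_gen (h ` S)"
proof -
  let ?L = "{y. h y \<in> ideal_gen (h ` S)}"
  have "is_ideal ?L" unfolding is_ideal_def
    using ideal_gen_ideal[of "h ` S"]
    by (auto simp: rhomD[OF h] intro: idealD(1,2,3))
  moreover have "S \<subseteq> ?L" using ideal_gen_sub[of "h ` S"] by auto
  ultimately show ?thesis using ideal_gen_least x by blast
qed

lemma rhom_image2:
  assumes h: "rhom h" and x: "x \<in> ideal_gen {f, g}"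
  shows "h x \<in> ideal_gen {h f, h g}"
  using rhom_image[OF h x] by simp


definition remf :: "'b::idom poly \<Rightarrow> 'b poly \<Rightarrow> 'b poly" where
  "remf f p = (SOME r. degree r < degree f \<and> f dvd (p - r))"

lemma rem_ex:
  fixes f :: "'b::idom poly"
  assumes lc: "lead_coeff f = 1" and d: "degree f \<ge> 1"
  shows "\<exists>r. degree r < degree f \<and> f dvd (p - r)"
proof -
  have f0: "f \<noteq> 0" using d by auto
  obtain q r where qr: "pseudo_divmod p f = (q, r)" by (cases "pseudo_divmod p f") auto
  from pseudo_divmod[OF f0 qr] lc
  have "p = f * q + r" "r = 0 \<or> degree r < degree f" by auto
  then show ?thesis using d by (intro exI[of _ r]) auto
qed

lemma remf_spec:
  fixes f :: "'b::idom poly"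
  assumes lc: "lead_coeff f = 1" and d: "degree f \<ge> 1"
  shows "degree (remf f p) < degree f" "f dvd (p - remf f p)"
  using someI_ex[OF rem_ex[OF lc d, of p]] unfolding remf_def by auto

lemma rem_unique:
  fixes f :: "'b::idom poly"
  assumes lc: "lead_coeff f = 1" and d: "degree f \<ge> 1"
    and r1: "degree r1 < degree f" and r2: "degree r2 < degree f" and dv: "f dvd (r1 - r2)"
  shows "r1 = r2"
proof (rule ccontr)
  assume ne: "r1 \<noteq> r2"
  from dv obtain h where h: "r1 - r2 = f * h" by (auto elim: dvdE)
  with ne have h0: "h \<noteq> 0" by auto
  have f0: "f \<noteq> 0" using d by auto
  have "degree (r1 - r2) = degree f + degree h" using h degree_mult_eq[OF f0 h0] by simp
  moreover have "degree (r1 - r2) \<le> max (degree r1) (degree r2)" by (rule degree_diff_le_max)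
  ultimately show False using r1 r2 by auto
qed

lemma remf_eq:
  fixes f :: "'b::idom poly"
  assumes lc: "lead_coeff f = 1" and d: "degree f \<ge> 1"
    and r: "degree r < degree f" and dv: "f dvd (p - r)"
  shows "remf f p = r"
proof (rule rem_unique[OF lc d remf_spec(1)[OF lc d] r])
  have "remf f p - r = (p - r) - (p - remf f p)" by simp
  then show "f dvd (remf f p - r)" using dv remf_spec(2)[OF lc d, of p] by (metis dvd_diff)
qed

lemma degree_map_poly_le0:
  assumes "h 0 = 0" shows "degree (map_poly h p) \<le> degree p"
  by (rule degree_le) (simp add: coeff_map_poly assms coeff_eq_0)

definition Mf :: "'b::idom poly \<Rightarrow> 'b poly \<Rightarrow> 'b mat" where
  "Mf f p = mat (degree f) (degree f) (\<lambda>(i,j). coeff (remf f (p * monom 1 j)) i)"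

lemma Mf_carrier: "Mf f p \<in> carrier_mat (degree f) (degree f)"
  unfolding Mf_def by auto

lemma Mf_dims[simp]: "dim_row (Mf f p) = degree f" "dim_col (Mf f p) = degree f"
  unfolding Mf_def by auto

lemma Mf_index: "i < degree f \<Longrightarrow> j < degree f \<Longrightarrow> Mf f p $$ (i,j) = coeff (remf f (p * monom 1 j)) i"
  unfolding Mf_def by auto

lemma degree_less_sum:
  fixes r :: "'b::idom poly"
  assumes "degree r < n"
  shows "r = (\<Sum>k<n. monom (coeff r k) k)"
proof -
  have "r = (\<Sum>k\<le>degree r. monom (coeff r k) k)" by (simp add: poly_as_sum_of_monoms)
  also have "\<dots> = (\<Sum>k<n. monom (coeff r k) k)"
    by (rule sum.mono_neutral_left) (use assms in \<open>auto simp: coeff_eq_0\<close>)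
  finally show ?thesis .
qed

lemma Mf_mult:
  fixes f :: "'b::idom poly"
  assumes lc: "lead_coeff f = 1" and d: "degree f \<ge> 1"
  shows "Mf f (p * q) = Mf f p * Mf f q"
proof (rule eq_matI)
  fix i j assume i: "i < dim_row (Mf f p * Mf f q)" and j: "j < dim_col (Mf f p * Mf f q)"
  let ?d = "degree f"
  from i j have i: "i < ?d" and j: "j < ?d" by auto
  define r where "r = remf f (q * monom 1 j)"
  have rd: "degree r < ?d" unfolding r_def by (rule remf_spec(1)[OF lc d])
  define S where "S = (\<Sum>k<?d. Polynomial.smult (coeff r k) (remf f (p * monom 1 k)))"
  have "remf f (p * q * monom 1 j) = S"
  proof (rule remf_eq[OF lc d])
    have aux: "degree (remf f x) \<le> degree f - 1" for x using remf_spec(1)[OF lc d, of x] by linarith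
    show "degree S < ?d" unfolding S_def
      by (rule le_less_trans[OF degree_sum_le[of _ _ "degree f - 1"]])
        (use d aux in \<open>auto intro: le_trans[OF degree_smult_le]\<close>)
    have pr: "p * r = (\<Sum>k<?d. Polynomial.smult (coeff r k) (p * monom 1 k))"
    proof -
      have "p * r = p * (\<Sum>k<?d. monom (coeff r k) k)" using degree_less_sum[OF rd] by simp
      also have "\<dots> = (\<Sum>k<?d. Polynomial.smult (coeff r k) (p * monom 1 k))"
        unfolding sum_distrib_left
        by (rule sum.cong) (simp_all add: mult_smult_right[symmetric] smult_monom)
      finally show ?thesis .
    qed
    have "p * q * monom 1 j - S = p * (q * monom 1 j - r) + (p * r - S)"
      by (simp add: algebra_simps)
    also have "p * r - S = (\<Sum>k<?d. Polynomial.smult (coeff r k) (p * monom 1 k - remf f (p * monom 1 k)))"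
      unfolding pr S_def by (simp add: sum_subtractf Polynomial.smult_diff_right)
    finally have eq: "p * q * monom 1 j - S = p * (q * monom 1 j - r) +
       (\<Sum>k<?d. Polynomial.smult (coeff r k) (p * monom 1 k - remf f (p * monom 1 k)))" .
    show "f dvd (p * q * monom 1 j - S)" unfolding eq
    proof (rule dvd_add)
      show "f dvd p * (q * monom 1 j - r)" unfolding r_def
        using remf_spec(2)[OF lc d] by (simp add: dvd_mult)
      show "f dvd (\<Sum>k<?d. Polynomial.smult (coeff r k) (p * monom 1 k - remf f (p * monom 1 k)))"
        by (rule dvd_sum) (use remf_spec(2)[OF lc d] in \<open>auto simp: dvd_smult\<close>)
    qed
  qed
  then have "Mf f (p * q) $$ (i, j) = coeff S i" using i j by (simp add: Mf_index mult.assoc)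
  also have "\<dots> = (\<Sum>k<?d. coeff r k * coeff (remf f (p * monom 1 k)) i)"
    unfolding S_def by (simp add: coeff_sum)
  also have "\<dots> = (Mf f p * Mf f q) $$ (i, j)"
    using i j by (simp add: scalar_prod_def Mf_index r_def lessThan_atLeast0 mult.commute)
  finally show "Mf f (p * q) $$ (i, j) = (Mf f p * Mf f q) $$ (i, j)" .
qed auto

lemma Mf_add:
  fixes f :: "'b::idom poly"
  assumes lc: "lead_coeff f = 1" and d: "degree f \<ge> 1"
  shows "Mf f (p + q) = Mf f p + Mf f q"
proof (rule eq_matI)
  fix i j assume i: "i < dim_row (Mf f p + Mf f q)" and j: "j < dim_col (Mf f p + Mf f q)"
  then have i: "i < degree f" and j: "j < degree f" by auto
  have "remf f ((p + q) * monom 1 j) = remf f (p * monom 1 j) + remf f (q * monom 1 j)"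
  proof (rule remf_eq[OF lc d])
    show "degree (remf f (p * monom 1 j) + remf f (q * monom 1 j)) < degree f"
      using remf_spec(1)[OF lc d] degree_add_le by (metis degree_add_le_max max.strict_boundedE le_less_trans max_less_iff_conj)
    have "(p + q) * monom 1 j - (remf f (p * monom 1 j) + remf f (q * monom 1 j)) =
      (p * monom 1 j - remf f (p * monom 1 j)) + (q * monom 1 j - remf f (q * monom 1 j))"
      by (simp add: algebra_simps)
    then show "f dvd (p + q) * monom 1 j - (remf f (p * monom 1 j) + remf f (q * monom 1 j))"
      using remf_spec(2)[OF lc d] by (metis dvd_add)
  qed
  then show "Mf f (p + q) $$ (i, j) = (Mf f p + Mf f q) $$ (i, j)"
    using i j by (simp add: Mf_index)
qed auto

lemma Mf_zero:
  fixes f :: "'b::idom poly"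
  assumes lc: "lead_coeff f = 1" and d: "degree f \<ge> 1"
  shows "Mf f (f * u) = 0\<^sub>m (degree f) (degree f)"
proof (rule eq_matI)
  fix i j assume i: "i < dim_row (0\<^sub>m (degree f) (degree f) :: 'b mat)"
    and j: "j < dim_col (0\<^sub>m (degree f) (degree f) :: 'b mat)"
  then have i: "i < degree f" and j: "j < degree f" by auto
  have "remf f (f * u * monom 1 j) = 0"
    by (rule remf_eq[OF lc d]) (use d in auto)
  then show "Mf f (f * u) $$ (i, j) = 0\<^sub>m (degree f) (degree f) $$ (i, j)"
    using i j by (simp add: Mf_index)
qed auto

lemma Mf_const:
  fixes f :: "'b::idom poly"
  assumes lc: "lead_coeff f = 1" and d: "degree f \<ge> 1"
  shows "Mf f [:a:] = a \<cdot>\<^sub>m 1\<^sub>m (degree f)"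
proof (rule eq_matI)
  fix i j assume i: "i < dim_row (a \<cdot>\<^sub>m 1\<^sub>m (degree f))" and j: "j < dim_col (a \<cdot>\<^sub>m 1\<^sub>m (degree f))"
  then have i: "i < degree f" and j: "j < degree f" by auto
  have "remf f ([:a:] * monom 1 j) = monom a j"
    by (rule remf_eq[OF lc d]) (use j in \<open>auto simp: smult_monom degree_monom_le intro: le_less_trans[OF degree_monom_le]\<close>)
  then show "Mf f [:a:] $$ (i, j) = (a \<cdot>\<^sub>m 1\<^sub>m (degree f)) $$ (i, j)"
    using i j by (simp add: Mf_index)
qed auto

lemma det_Mf_const:
  fixes f :: "'b::idom poly"
  assumes lc: "lead_coeff f = 1" and d: "degree f \<ge> 1"
  shows "det (Mf f [:a:]) = a ^ degree f"
  using Mf_const[OF lc d] by simp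

lemma norm_combo:
  fixes f :: "'b::idom poly"
  assumes lc: "lead_coeff f = 1" and d: "degree f \<ge> 1"
    and eq: "[:a:] = u * f + v * g"
  shows "a ^ degree f = det (Mf f v) * det (Mf f g)"
proof -
  have "Mf f [:a:] = Mf f (f * u) + Mf f (v * g)" using eq Mf_add[OF lc d] by (simp add: mult.commute)
  also have "\<dots> = 0\<^sub>m (degree f) (degree f) + Mf f v * Mf f g"
    by (simp only: Mf_zero[OF lc d, of u] Mf_mult[OF lc d, of v g])
  also have "\<dots> = Mf f v * Mf f g"
    by (rule left_add_zero_mat) (auto intro: mult_carrier_mat Mf_carrier)
  finally have "det (Mf f [:a:]) = det (Mf f v) * det (Mf f g)"
    using det_mult[OF Mf_carrier Mf_carrier] by simp
  then show ?thesis using det_Mf_const[OF lc d] by simp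
qed

lemma det_row0:
  assumes A: "A \<in> carrier_mat n n" and n: "n \<ge> 1" and z: "\<And>j. j < n \<Longrightarrow> A $$ (0, j) = 0"
  shows "det A = 0"
proof -
  have "det A = (\<Sum>p\<in>{p. p permutes {0..<n}}. signof p * (\<Prod>i = 0..<n. A $$ (i, p i)))"
    by (rule det_def'[OF A])
  also have "\<dots> = 0"
  proof (rule sum.neutral, intro ballI)
    fix p assume "p \<in> {p. p permutes {0..<n}}"
    then have "p 0 < n" using n by (auto dest: permutes_in_image[of p _ 0])
    then have "(\<Prod>i = 0..<n. A $$ (i, p i)) = 0"
      using n z by (intro prod_zero) (auto intro!: bexI[of _ 0])
    then show "signof p * (\<Prod>i = 0..<n. A $$ (i, p i)) = 0" by simp
  qed
  finally show ?thesis .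
qed

lemma det_Mf_zero_coeff:
  fixes f :: "'b::idom poly"
  assumes lc: "lead_coeff f = 1" and d: "degree f \<ge> 1"
    and f0: "coeff f 0 = 0" and g0: "coeff g 0 = 0"
  shows "det (Mf f g) = 0"
proof (rule det_row0[OF Mf_carrier d])
  fix j assume j: "j < degree f"
  obtain q where q: "g * monom 1 j - remf f (g * monom 1 j) = f * q"
    using remf_spec(2)[OF lc d] by (auto elim: dvdE)
  have "coeff (g * monom 1 j - remf f (g * monom 1 j)) 0 = coeff (f * q) 0" using q by simp
  then have "coeff (remf f (g * monom 1 j)) 0 = 0"
    using f0 g0 by (simp add: coeff_mult_0)
  then show "Mf f g $$ (0, j) = 0" using j d by (simp add: Mf_index)
qed

lemma degree_map_poly_monic:
  assumes h: "rhom h" and lc: "lead_coeff f = 1"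
  shows "degree (map_poly h f) = degree f" "lead_coeff (map_poly h f) = 1"
proof -
  have c: "coeff (map_poly h f) (degree f) = 1"
    using lc by (simp add: coeff_map_poly rhomD[OF h])
  have "degree (map_poly h f) \<le> degree f" by (rule degree_map_poly_le0) (simp add: rhomD[OF h])
  moreover have "degree f \<le> degree (map_poly h f)" using c by (intro le_degree) simp
  ultimately show "degree (map_poly h f) = degree f" by simp
  then show "lead_coeff (map_poly h f) = 1" using c by simp
qed

lemma remf_map:
  fixes f :: "'b::idom poly" and h :: "'b \<Rightarrow> 'c::idom"
  assumes h: "rhom h" and lc: "lead_coeff f = 1" and d: "degree f \<ge> 1"
  shows "map_poly h (remf f p) = remf (map_poly h f) (map_poly h p)"
proof -
  note dm = degree_map_poly_monic[OF h lc]
  show ?thesis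
  proof (rule remf_eq[symmetric])
    show "lead_coeff (map_poly h f) = 1" "1 \<le> degree (map_poly h f)" using dm d by auto
    show "degree (map_poly h (remf f p)) < degree (map_poly h f)"
      using dm remf_spec(1)[OF lc d, of p] degree_map_poly_le0[of h "remf f p"] by (simp add: rhomD[OF h])
    obtain q where q: "p - remf f p = f * q" using remf_spec(2)[OF lc d] by (auto elim: dvdE)
    have "map_poly h p - map_poly h (remf f p) = map_poly h (p - remf f p)"
      using rhomD(6)[OF rhom_map_poly[OF h]] by simp
    also have "\<dots> = map_poly h f * map_poly h q" using q rhomD(3)[OF rhom_map_poly[OF h]] by simp
    finally show "map_poly h f dvd map_poly h p - map_poly h (remf f p)" by simp
  qed
qed

lemma Mf_map:
  fixes f :: "'b::idom poly" and h :: "'b \<Rightarrow> 'c::idom"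
  assumes h: "rhom h" and lc: "lead_coeff f = 1" and d: "degree f \<ge> 1"
  shows "map_mat h (Mf f p) = Mf (map_poly h f) (map_poly h p)"
proof (rule eq_matI)
  note dm = degree_map_poly_monic[OF h lc]
  fix i j assume "i < dim_row (Mf (map_poly h f) (map_poly h p))" "j < dim_col (Mf (map_poly h f) (map_poly h p))"
  then have i: "i < degree f" and j: "j < degree f" using dm by auto
  have "map_poly h (p * monom 1 j) = map_poly h p * monom 1 j"
    using rhomD(3)[OF rhom_map_poly[OF h]] by (simp add: rhomD[OF h] map_poly_monom)
  then have "coeff (remf (map_poly h f) (map_poly h p * monom 1 j)) i = h (coeff (remf f (p * monom 1 j)) i)"
    using remf_map[OF h lc d, of "p * monom 1 j"] by (metis coeff_map_poly rhomD(4)[OF h])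
  then show "map_mat h (Mf f p) $$ (i, j) = Mf (map_poly h f) (map_poly h p) $$ (i, j)"
    using i j dm
    by (simp add: Mf_index)
qed (use degree_map_poly_monic[OF h lc] in auto)

lemma det_map:
  assumes h: "rhom h"
  shows "det (map_mat h A) = h (det A)"
proof -
  interpret comm_ring_hom h
    by unfold_locales (simp_all add: rhomD[OF h])
  show ?thesis by simp
qed


definition ev00 :: "'a::field poly poly \<Rightarrow> 'a" where
  "ev00 G = poly (poly G 0) 0"

lemma rhom_ev00: "rhom ev00"
proof -
  have "ev00 = (\<lambda>p. poly p 0) \<circ> (\<lambda>G. poly G 0)" unfolding ev00_def by auto
  then show ?thesis using rhom_comp[OF rhom_poly rhom_poly] by metis
qed

lemma divides_const_power:
  fixes N :: "'a::field poly poly"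
  assumes "N dvd [:c:] ^ k" and "c \<noteq> 0"
  shows "N = [:coeff N 0:]"
proof -
  from assms obtain s where s: "[:c:] ^ k = N * s" by (auto elim: dvdE)
  have nz: "[:c:] ^ k \<noteq> 0" using assms by simp
  then have "N \<noteq> 0" "s \<noteq> 0" using s by auto
  then have "degree ([:c:] ^ k) = degree N + degree s" using s degree_mult_eq by metis
  moreover have "degree ([:c:] ^ k) = 0" by (simp add: poly_const_pow)
  ultimately have "degree N = 0" by simp
  then show ?thesis by (rule degree_0_id[symmetric])
qed

lemma norm_contra:
  fixes f g :: "'a::field poly poly poly"
  assumes lc: "lead_coeff f = 1" and d: "degree f \<ge> 1"
    and ex: "[:[:[:0,1:]:]:] ^ n1 \<in> ideal_gen {f, g}"
    and ey: "[:[:0,1:]:] ^ n2 \<in> ideal_gen {f, g}"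
    and f0: "coeff (map_poly ev00 f) 0 = 0" and g0: "coeff (map_poly ev00 g) 0 = 0"
  shows False
proof -
  let ?N = "det (Mf f g)"
  let ?x = "[:[:0,1:]:] :: 'a poly poly"
  let ?y = "[:0,1:] :: 'a poly poly"
  have "[:?x ^ n1:] \<in> ideal_gen {f, g}" using ex by (simp add: poly_const_pow)
  then obtain u v where "[:?x ^ n1:] = u * f + v * g" unfolding ideal2 by auto
  from norm_combo[OF lc d this] have "(?x ^ n1) ^ degree f = det (Mf f v) * ?N" .
  then have "?N dvd [:[:0,1:]:] ^ (n1 * degree f)" by (simp add: power_mult)
  then have Nc: "?N = [:coeff ?N 0:]" by (rule divides_const_power) simp
  have "[:?y ^ n2:] \<in> ideal_gen {f, g}" using ey by (simp add: poly_const_pow)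
  then obtain u' v' where "[:?y ^ n2:] = u' * f + v' * g" unfolding ideal2 by auto
  from norm_combo[OF lc d this] have "(?y ^ n2) ^ degree f = det (Mf f v') * ?N" .
  then have "?y ^ (n2 * degree f) = ?N * det (Mf f v')"
    by (simp add: power_mult mult.commute)
  then obtain t where "?y ^ (n2 * degree f) = [:coeff ?N 0:] * t"
    using Nc by metis
  then have "coeff (?y ^ (n2 * degree f)) (n2 * degree f) = coeff ([:coeff ?N 0:] * t) (n2 * degree f)"
    by simp
  moreover have "?y ^ (n2 * degree f) = monom 1 (n2 * degree f)" by (simp add: monom_altdef)
  ultimately have "1 = coeff ?N 0 * coeff t (n2 * degree f)"
    by simp
  then have "poly (coeff ?N 0) 0 * poly (coeff t (n2 * degree f)) 0 = 1"
    by (metis poly_1 poly_mult)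
  then have ne: "ev00 ?N \<noteq> 0" unfolding ev00_def using Nc
    by (metis mult_eq_0_iff poly_pCons zero_neq_one mult_zero_right add.right_neutral poly_0)
  note dm = degree_map_poly_monic[OF rhom_ev00 lc]
  have "ev00 ?N = det (map_mat ev00 (Mf f g))" by (simp add: det_map[OF rhom_ev00])
  also have "\<dots> = det (Mf (map_poly ev00 f) (map_poly ev00 g))"
    by (simp add: Mf_map[OF rhom_ev00 lc d])
  also have "\<dots> = 0" by (rule det_Mf_zero_coeff) (use dm d f0 g0 in auto)
  finally show False using ne by simp
qed


definition Xv :: "'a::field poly poly poly" where "Xv = [:[:[:0,1:]:]:]"
definition Yv :: "'a::field poly poly poly" where "Yv = [:[:0,1:]:]"
definition Zv :: "'a::field poly poly poly" where "Zv = [:0,1:]"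
definition c0 :: "'a::field \<Rightarrow> 'a poly poly poly" where "c0 k = [:[:[:k:]:]:]"
definition phi1 :: "nat \<Rightarrow> 'a::field poly \<Rightarrow> 'a poly poly poly" where
  "phi1 e1 H = poly (map_poly c0 H) (Xv + Zv ^ e1)"
definition phi2 :: "nat \<Rightarrow> nat \<Rightarrow> 'a::field poly poly \<Rightarrow> 'a poly poly poly" where
  "phi2 e1 e2 G = poly (map_poly (phi1 e1) G) (Yv + Zv ^ e2)"
definition sig :: "nat \<Rightarrow> nat \<Rightarrow> 'a::field poly poly poly \<Rightarrow> 'a poly poly poly" where
  "sig e1 e2 F = poly (map_poly (phi2 e1 e2) F) Zv"

lemma rhom_c0: "rhom c0"
proof -
  have "c0 = (\<lambda>a. [:a:]) \<circ> (\<lambda>a. [:a:]) \<circ> (\<lambda>a. [:a:])" unfolding c0_def by auto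
  then show ?thesis by (metis rhom_comp rhom_const)
qed

lemma rhom_phi1: "rhom (phi1 e1)"
proof -
  have "phi1 e1 = (\<lambda>p. poly p (Xv + Zv ^ e1)) \<circ> map_poly c0" unfolding phi1_def by auto
  then show ?thesis by (metis rhom_comp rhom_poly rhom_map_poly rhom_c0)
qed

lemma rhom_phi2: "rhom (phi2 e1 e2)"
proof -
  have "phi2 e1 e2 = (\<lambda>p. poly p (Yv + Zv ^ e2)) \<circ> map_poly (phi1 e1)" unfolding phi2_def by auto
  then show ?thesis by (metis rhom_comp rhom_poly rhom_map_poly rhom_phi1)
qed

lemma rhom_sig: "rhom (sig e1 e2)"
proof -
  have "sig e1 e2 = (\<lambda>p. poly p Zv) \<circ> map_poly (phi2 e1 e2)" unfolding sig_def by auto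
  then show ?thesis by (metis rhom_comp rhom_poly rhom_map_poly rhom_phi2)
qed

lemma sig_X: "sig e1 e2 Xv = Xv + Zv ^ e1"
  by (simp add: sig_def phi2_def phi1_def Xv_def c0_def map_poly_pCons one_pCons[symmetric])

lemma sig_Y: "sig e1 e2 Yv = Yv + Zv ^ e2"
  by (simp add: sig_def phi2_def Yv_def map_poly_pCons rhomD[OF rhom_phi1])

lemma sig_Z: "sig e1 e2 Zv = Zv"
  by (simp add: sig_def Zv_def map_poly_pCons rhomD[OF rhom_phi2])

lemma poly_bound:
  fixes x :: "'b::comm_ring_1"
  assumes "degree p \<le> D"
  shows "poly p x = (\<Sum>i\<le>D. coeff p i * x ^ i)"
proof -
  have "poly p x = (\<Sum>i\<le>degree p. coeff p i * x ^ i)" by (rule poly_altdef)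
  also have "\<dots> = (\<Sum>i\<le>D. coeff p i * x ^ i)"
    by (rule sum.mono_neutral_left) (use assms in \<open>auto simp: coeff_eq_0\<close>)
  finally show ?thesis .
qed

lemma poly_map_bound:
  assumes h: "rhom h" and "degree p \<le> D"
  shows "poly (map_poly h p) x = (\<Sum>i\<le>D. h (coeff p i) * x ^ i)"
proof -
  have "degree (map_poly h p) \<le> D"
    using degree_map_poly_le0[of h p] assms rhomD(4)[OF h] by simp
  from poly_bound[OF this] show ?thesis by (simp add: coeff_map_poly rhomD(4)[OF h])
qed

lemma finite_bound:
  fixes n :: nat and P :: "nat \<Rightarrow> nat \<Rightarrow> bool"
  assumes zero: "\<And>l. l > n \<Longrightarrow> P l 0" and mon: "\<And>l D D'. P l D \<Longrightarrow> D \<le> D' \<Longrightarrow> P l D'"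
    and ex: "\<And>l. \<exists>D. P l D"
  shows "\<exists>D. \<forall>l. P l D"
proof -
  have "\<exists>D. \<forall>l\<le>m. P l D" for m
  proof (induction m)
    case 0 then show ?case using ex by auto
  next
    case (Suc m)
    then obtain D where D: "\<forall>l\<le>m. P l D" by auto
    obtain D' where D': "P (Suc m) D'" using ex by auto
    have "\<forall>l\<le>Suc m. P l (max D D')"
    proof (intro allI impI)
      fix l assume "l \<le> Suc m"
      then consider "l \<le> m" | "l = Suc m" by linarith
      then show "P l (max D D')"
      proof cases
        case 1 then have "P l D" using D by auto
        then show ?thesis by (rule mon[OF _ max.cobounded1])
      next
        case 2 then show ?thesis using mon[OF D' max.cobounded2] by simp
      qed
    qed
    then show ?case by blast
  qed
  then obtain D where D: "\<forall>l\<le>n. P l D" by auto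
  have "P l D" for l
  proof (cases "l \<le> n")
    case True then show ?thesis using D by auto
  next
    case False then show ?thesis using zero[of l] mon[of l 0 D] by auto
  qed
  then show ?thesis by blast
qed

lemma degree_bound3:
  fixes F :: "'a::field poly poly poly"
  shows "\<exists>D. degree F \<le> D \<and> (\<forall>l. degree (coeff F l) \<le> D) \<and> (\<forall>l j. degree (coeff (coeff F l) j) \<le> D)"
proof -
  have b1: "\<exists>D. \<forall>j. degree (coeff G j) \<le> D" for G :: "'a poly poly"
    by (rule finite_bound[of "degree G"]) (auto simp: coeff_eq_0)
  have "\<exists>D. \<forall>l. (\<forall>j. degree (coeff (coeff F l) j) \<le> D)"
    by (rule finite_bound[of "degree F"]) (use b1 in \<open>auto simp: coeff_eq_0 intro: le_trans\<close>)
  then obtain D1 where D1: "\<forall>l j. degree (coeff (coeff F l) j) \<le> D1" by auto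
  have "\<exists>D. \<forall>l. degree (coeff F l) \<le> D"
    by (rule finite_bound[of "degree F"]) (auto simp: coeff_eq_0)
  then obtain D2 where D2: "\<forall>l. degree (coeff F l) \<le> D2" by auto
  show ?thesis
  proof (intro exI[of _ "degree F + D1 + D2"] conjI allI)
    show "degree F \<le> degree F + D1 + D2" by simp
    show "degree (coeff F l) \<le> degree F + D1 + D2" for l using D2 by (metis le_add2 le_trans)
    show "degree (coeff (coeff F l) j) \<le> degree F + D1 + D2" for l j
      using D1 by (metis add.commute add.left_commute le_add2 le_trans)
  qed
qed

definition Pm :: "nat \<Rightarrow> nat \<Rightarrow> nat \<times> nat \<times> nat \<Rightarrow> 'a::field poly poly poly" where
  "Pm e1 e2 t = (case t of (l, j, i) \<Rightarrow> (Xv + Zv ^ e1) ^ i * (Yv + Zv ^ e2) ^ j * Zv ^ l)"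

definition kc :: "'a::field poly poly poly \<Rightarrow> nat \<times> nat \<times> nat \<Rightarrow> 'a" where
  "kc F t = (case t of (l, j, i) \<Rightarrow> coeff (coeff (coeff F l) j) i)"

lemma sig_expand:
  fixes F :: "'a::field poly poly poly"
  assumes D: "degree F \<le> D" "\<And>l. degree (coeff F l) \<le> D" "\<And>l j. degree (coeff (coeff F l) j) \<le> D"
  shows "sig e1 e2 F = (\<Sum>t\<in>{..D} \<times> {..D} \<times> {..D}. c0 (kc F t) * Pm e1 e2 t)"
proof -
  have p1: "phi1 e1 H = (\<Sum>i\<le>D. c0 (coeff H i) * (Xv + Zv ^ e1) ^ i)" if "degree H \<le> D" for H
    unfolding phi1_def by (rule poly_map_bound[OF rhom_c0 that])
  have p2: "phi2 e1 e2 G = (\<Sum>j\<le>D. phi1 e1 (coeff G j) * (Yv + Zv ^ e2) ^ j)" if "degree G \<le> D" for G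
    unfolding phi2_def by (rule poly_map_bound[OF rhom_phi1 that])
  have "sig e1 e2 F = (\<Sum>l\<le>D. phi2 e1 e2 (coeff F l) * Zv ^ l)"
    unfolding sig_def by (rule poly_map_bound[OF rhom_phi2 D(1)])
  also have "\<dots> = (\<Sum>l\<le>D. \<Sum>j\<le>D. \<Sum>i\<le>D. c0 (coeff (coeff (coeff F l) j) i) *
      ((Xv + Zv ^ e1) ^ i * (Yv + Zv ^ e2) ^ j * Zv ^ l))"
    by (simp add: p1 p2 D sum_distrib_right mult.assoc)
  also have "\<dots> = (\<Sum>t\<in>{..D} \<times> {..D} \<times> {..D}. c0 (kc F t) * Pm e1 e2 t)"
    by (simp add: sum.cartesian_product kc_def Pm_def case_prod_beta)
  finally show ?thesis .
qed


lemma lead_sum: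
  fixes P :: "'t \<Rightarrow> 'b::idom poly" and a :: "'t \<Rightarrow> 'b" and w :: "'t \<Rightarrow> nat"
  assumes fin: "finite T" and t0: "t0 \<in> T" and a0: "a t0 \<noteq> 0"
    and PT: "\<And>t. t \<in> T \<Longrightarrow> lead_coeff (P t) = 1 \<and> degree (P t) = w t"
    and less: "\<And>t. t \<in> T \<Longrightarrow> t \<noteq> t0 \<Longrightarrow> a t \<noteq> 0 \<Longrightarrow> w t < w t0"
  shows "degree (\<Sum>t\<in>T. Polynomial.smult (a t) (P t)) = w t0"
    and "lead_coeff (\<Sum>t\<in>T. Polynomial.smult (a t) (P t)) = a t0"
proof -
  let ?S = "\<Sum>t\<in>T. Polynomial.smult (a t) (P t)"
  have c: "coeff ?S n = a t0 * coeff (P t0) n" if n: "n \<ge> w t0" for n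
  proof -
    have "coeff ?S n = (\<Sum>t\<in>T. a t * coeff (P t) n)" by (simp add: coeff_sum)
    also have "\<dots> = a t0 * coeff (P t0) n + (\<Sum>t\<in>T - {t0}. a t * coeff (P t) n)"
      by (rule sum.remove[OF fin t0])
    also have "(\<Sum>t\<in>T - {t0}. a t * coeff (P t) n) = 0"
    proof (rule sum.neutral, intro ballI)
      fix t assume t: "t \<in> T - {t0}"
      show "a t * coeff (P t) n = 0"
      proof (cases "a t = 0")
        case False
        then have "w t < w t0" using less t by auto
        then have "degree (P t) < n" using PT t n by auto
        then show ?thesis by (simp add: coeff_eq_0)
      qed simp
    qed
    finally show ?thesis by simp
  qed
  have ct0: "coeff ?S (w t0) = a t0" using c[of "w t0"] PT[OF t0] by auto
  have "degree ?S \<le> w t0"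
  proof (rule degree_le, intro allI impI)
    fix n assume "w t0 < n"
    then show "coeff ?S n = 0" using c[of n] PT[OF t0] by (simp add: coeff_eq_0)
  qed
  moreover have "w t0 \<le> degree ?S" using ct0 a0 by (intro le_degree) simp
  ultimately show dg: "degree ?S = w t0" by simp
  show "lead_coeff ?S = a t0" using dg ct0 by simp
qed

lemma monic_mult:
  fixes p q :: "'b::idom poly"
  assumes "lead_coeff p = 1" "lead_coeff q = 1"
  shows "lead_coeff (p * q) = 1" "degree (p * q) = degree p + degree q"
proof -
  have "p \<noteq> 0" "q \<noteq> 0" using assms by auto
  then show "degree (p * q) = degree p + degree q" by (rule degree_mult_eq)
  show "lead_coeff (p * q) = 1" using assms by (simp add: lead_coeff_mult)
qed

lemma monic_power:
  fixes p :: "'b::idom poly"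
  assumes "lead_coeff p = 1"
  shows "lead_coeff (p ^ n) = 1" "degree (p ^ n) = n * degree p"
proof -
  have "p \<noteq> 0" using assms by auto
  then show "degree (p ^ n) = n * degree p" by (rule degree_power_eq)
  show "lead_coeff (p ^ n) = 1" using assms by (simp add: lead_coeff_power)
qed

lemma monic_shift:
  fixes a :: "'b::idom"
  assumes e: "e \<ge> 1"
  shows "lead_coeff ([:a:] + [:0,1:] ^ e) = 1" "degree ([:a:] + [:0,1:] ^ e) = e"
proof -
  have m: "[:0,1:] ^ e = (monom 1 e :: 'b poly)" by (simp add: monom_altdef)
  have c: "coeff ([:a:] + [:0,1:] ^ e) e = 1" using e by (simp add: m coeff_pCons split: nat.split)
  have "degree ([:a:] + [:0,1:] ^ e) \<le> e"
    by (rule degree_le) (use e in \<open>auto simp: m coeff_pCons split: nat.split\<close>)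
  moreover have "e \<le> degree ([:a:] + [:0,1:] ^ e)" using c by (intro le_degree) simp
  ultimately show dg: "degree ([:a:] + [:0,1:] ^ e) = e" by simp
  show "lead_coeff ([:a:] + [:0,1:] ^ e) = 1" using dg c by simp
qed

definition wt :: "nat \<Rightarrow> nat \<Rightarrow> nat \<times> nat \<times> nat \<Rightarrow> nat" where
  "wt e1 e2 t = (case t of (l, j, i) \<Rightarrow> i * e1 + j * e2 + l)"

lemma Pm_monic:
  assumes "e1 \<ge> 1" "e2 \<ge> 1"
  shows "lead_coeff (Pm e1 e2 t :: 'a::field poly poly poly) = 1 \<and> degree (Pm e1 e2 t :: 'a poly poly poly) = wt e1 e2 t"
proof -
  obtain l j i where t: "t = (l, j, i)" by (cases t) auto
  have x: "lead_coeff (Xv + Zv ^ e1 :: 'a poly poly poly) = 1" "degree (Xv + Zv ^ e1 :: 'a poly poly poly) = e1"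
    unfolding Xv_def Zv_def using monic_shift[OF assms(1)] by auto
  have y: "lead_coeff (Yv + Zv ^ e2 :: 'a poly poly poly) = 1" "degree (Yv + Zv ^ e2 :: 'a poly poly poly) = e2"
    unfolding Yv_def Zv_def using monic_shift[OF assms(2)] by auto
  have z: "lead_coeff (Zv :: 'a poly poly poly) = 1" "degree (Zv :: 'a poly poly poly) = 1"
    unfolding Zv_def by auto
  note xi = monic_power[OF x(1), of i] and yj = monic_power[OF y(1), of j] and zl = monic_power[OF z(1), of l]
  note m1 = monic_mult[OF xi(1) yj(1)]
  note m2 = monic_mult[OF m1(1) zl(1)]
  show ?thesis unfolding t Pm_def wt_def using m2 m1 xi yj zl x y z by simp
qed

lemma digits_inj:
  fixes B :: nat
  assumes "l < B" "l' < B" "l + B * q = l' + B * q'"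
  shows "l = l' \<and> q = q'"
proof -
  have "l = (l + B * q) mod B" using assms(1) by simp
  also have "\<dots> = (l' + B * q') mod B" using assms(3) by simp
  also have "\<dots> = l'" using assms(2) by simp
  finally have ll: "l = l'" .
  then have "B * q = B * q'" using assms by simp
  then show ?thesis using ll assms by auto
qed

lemma wt_inj:
  assumes "t \<in> {..D} \<times> {..D} \<times> {..D}" "s \<in> {..D} \<times> {..D} \<times> {..D}"
    and "wt (D+1) ((D+1)*(D+1)) t = wt (D+1) ((D+1)*(D+1)) s"
  shows "t = s"
proof -
  obtain l j i where t: "t = (l, j, i)" by (cases t) auto
  obtain l' j' i' where s: "s = (l', j', i')" by (cases s) auto
  let ?B = "D + 1"
  have "l + ?B * (i + ?B * j) = l' + ?B * (i' + ?B * j')"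
    using assms(3) unfolding t s wt_def by (simp add: algebra_simps)
  moreover have "l < ?B" "l' < ?B" "i < ?B" "i' < ?B" using assms unfolding t s by auto
  ultimately have "l = l'" "i + ?B * j = i' + ?B * j'" using digits_inj by blast+
  then have "l = l'" "i = i'" "j = j'" using digits_inj[of i ?B i' j j'] \<open>i < ?B\<close> \<open>i' < ?B\<close> by auto
  then show ?thesis unfolding t s by simp
qed

lemma nagata:
  fixes F :: "'a::field poly poly poly"
  assumes F: "F \<noteq> 0"
  shows "\<exists>e1 e2 c. e1 \<ge> 1 \<and> e2 \<ge> 1 \<and> c \<noteq> 0 \<and> lead_coeff (sig e1 e2 F) = [:[:c:]:]"
proof -
  obtain D where D: "degree F \<le> D" "\<And>l. degree (coeff F l) \<le> D" "\<And>l j. degree (coeff (coeff F l) j) \<le> D"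
    using degree_bound3[of F] by auto
  define e1 where "e1 = D + 1"
  define e2 where "e2 = (D + 1) * (D + 1)"
  have e: "e1 \<ge> 1" "e2 \<ge> 1" unfolding e1_def e2_def by auto
  define T where "T = {..D} \<times> {..D} \<times> {..D}"
  define T' where "T' = {t \<in> T. kc F t \<noteq> 0}"
  have finT: "finite T" unfolding T_def by auto
  define l0 where "l0 = degree F"
  define j0 where "j0 = degree (coeff F l0)"
  define i0 where "i0 = degree (coeff (coeff F l0) j0)"
  have "coeff F l0 \<noteq> 0" using F unfolding l0_def by simp
  then have "coeff (coeff F l0) j0 \<noteq> 0" unfolding j0_def by simp
  then have "coeff (coeff (coeff F l0) j0) i0 \<noteq> 0" unfolding i0_def by simp
  then have "(l0, j0, i0) \<in> T'" unfolding T'_def T_def kc_def l0_def j0_def i0_def using D by auto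
  then have ne: "T' \<noteq> {}" by auto
  have finT': "finite T'" using finT unfolding T'_def by auto
  have "Max (wt e1 e2 ` T') \<in> wt e1 e2 ` T'" using finT' ne by (intro Max_in) auto
  then obtain t0 where t0: "t0 \<in> T'" and wt0: "wt e1 e2 t0 = Max (wt e1 e2 ` T')" by auto
  have le: "wt e1 e2 t \<le> wt e1 e2 t0" if "t \<in> T'" for t
    using that finT' wt0 by (simp add: Max_ge)
  let ?a = "\<lambda>t. [:[:kc F t:]:]"
  have "sig e1 e2 F = (\<Sum>t\<in>T. c0 (kc F t) * Pm e1 e2 t)"
    unfolding T_def by (rule sig_expand[OF D])
  also have "\<dots> = (\<Sum>t\<in>T. Polynomial.smult (?a t) (Pm e1 e2 t))"
    by (simp add: c0_def)
  finally have sE: "sig e1 e2 F = (\<Sum>t\<in>T. Polynomial.smult (?a t) (Pm e1 e2 t))" .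
  have "lead_coeff (\<Sum>t\<in>T. Polynomial.smult (?a t) (Pm e1 e2 t)) = ?a t0"
  proof (rule lead_sum(2)[OF finT, where w = "wt e1 e2"])
    show "t0 \<in> T" using t0 unfolding T'_def by auto
    show "?a t0 \<noteq> 0" using t0 unfolding T'_def by auto
    show "lead_coeff (Pm e1 e2 t :: 'a poly poly poly) = 1 \<and> degree (Pm e1 e2 t :: 'a poly poly poly) = wt e1 e2 t" for t
      using Pm_monic[OF e, of t] by blast
    fix t assume t: "t \<in> T" "t \<noteq> t0" "?a t \<noteq> 0"
    then have tT': "t \<in> T'" unfolding T'_def by auto
    then have "wt e1 e2 t \<le> wt e1 e2 t0" by (rule le)
    moreover have "wt e1 e2 t \<noteq> wt e1 e2 t0"
    proof
      assume "wt e1 e2 t = wt e1 e2 t0"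
      then have "t = t0" using wt_inj[of t D t0] tT' t0 unfolding T'_def T_def e1_def e2_def by auto
      then show False using t by simp
    qed
    ultimately show "wt e1 e2 t < wt e1 e2 t0" by simp
  qed
  then have "lead_coeff (sig e1 e2 F) = [:[:kc F t0:]:]" using sE by simp
  moreover have "kc F t0 \<noteq> 0" using t0 unfolding T'_def by auto
  ultimately show ?thesis using e by blast
qed


abbreviation mm :: "'a::field poly poly poly set" where "mm \<equiv> ideal_gen {Xv, Yv, Zv}"

lemma mm_ideal: "is_ideal (mm :: 'a::field poly poly poly set)" by (rule ideal_gen_ideal)

lemma in_mm: "Xv \<in> mm" "Yv \<in> mm" "Zv \<in> mm"
  using ideal_gen_sub[of "{Xv, Yv, Zv}"] by auto

lemma ev_mm:
  assumes "p \<in> (mm :: 'a::field poly poly poly set)"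
  shows "coeff (map_poly ev00 p) 0 = 0"
proof -
  let ?L = "{p :: 'a poly poly poly. coeff (map_poly ev00 p) 0 = 0}"
  note h = rhomD[OF rhom_map_poly[OF rhom_ev00]]
  have "is_ideal ?L" unfolding is_ideal_def
    by (auto simp: h coeff_mult_0)
  moreover have "{Xv, Yv, Zv} \<subseteq> ?L"
    by (simp add: Xv_def Yv_def Zv_def ev00_def map_poly_pCons)
  ultimately show ?thesis using ideal_gen_least assms by blast
qed

lemma sig_mm:
  assumes p: "p \<in> (mm :: 'a::field poly poly poly set)" and e: "e1 \<ge> 1" "e2 \<ge> 1"
  shows "sig e1 e2 p \<in> mm"
proof -
  have "sig e1 e2 p \<in> ideal_gen (sig e1 e2 ` {Xv, Yv, Zv})" by (rule rhom_image[OF rhom_sig p])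
  also have "\<dots> \<subseteq> mm"
  proof (rule ideal_gen_least[OF mm_ideal])
    have z: "Zv ^ e \<in> mm" if "e \<ge> 1" for e :: nat
      using ideal_power[OF mm_ideal in_mm(3), of e] that by simp
    show "sig e1 e2 ` {Xv, Yv, Zv} \<subseteq> mm"
      using z[OF e(1)] z[OF e(2)] in_mm
      by (auto simp: sig_X sig_Y sig_Z intro!: idealD(2)[OF mm_ideal])
  qed
  finally show ?thesis .
qed

lemma rad_power_in:
  assumes "x \<in> rad J" shows "\<exists>n. x ^ n \<in> J"
  using assms unfolding rad_def by auto

lemma three_var_nz:
  fixes F G :: "'a::field poly poly poly"
  assumes F0: "F \<noteq> 0" and Fm: "F \<in> mm" and Gm: "G \<in> mm"
    and ex: "Xv ^ a \<in> ideal_gen {F, G}" and ey: "Yv ^ b \<in> ideal_gen {F, G}"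
    and ez: "Zv ^ c \<in> ideal_gen {F, G}"
  shows False
proof -
  obtain e1 e2 k where e: "e1 \<ge> 1" "e2 \<ge> 1" and k: "k \<noteq> 0"
    and lc: "lead_coeff (sig e1 e2 F) = [:[:k:]:]"
    using nagata[OF F0] by auto
  define f where "f = c0 (inverse k) * sig e1 e2 F"
  define g where "g = sig e1 e2 G"
  have lcf: "lead_coeff f = 1" unfolding f_def c0_def using lc k
    by (simp add: lead_coeff_mult pCons_one)
  have "c0 k * c0 (inverse k) = (1 :: 'a poly poly poly)"
    using k by (simp add: rhomD(3)[OF rhom_c0, symmetric] rhomD(1)[OF rhom_c0])
  then have sf: "sig e1 e2 F = c0 k * f" unfolding f_def
    by (simp add: mult.assoc[symmetric])
  have sub: "ideal_gen {sig e1 e2 F, sig e1 e2 G} \<subseteq> ideal_gen {f, g}"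
  proof
    fix p assume "p \<in> ideal_gen {sig e1 e2 F, sig e1 e2 G}"
    then obtain u v where "p = u * sig e1 e2 F + v * sig e1 e2 G" unfolding ideal2 by auto
    then have "p = (u * c0 k) * f + v * g" unfolding sf g_def by (simp add: mult.assoc)
    then show "p \<in> ideal_gen {f, g}" unfolding ideal2 by blast
  qed
  let ?J = "ideal_gen {f, g}"
  have J: "is_ideal ?J" by (rule ideal_gen_ideal)
  have RJ: "is_ideal (rad ?J)" by (rule rad_ideal[OF J])
  have im: "sig e1 e2 p \<in> ?J" if "p \<in> ideal_gen {F, G}" for p
    using rhom_image2[OF rhom_sig that] sub by auto
  have "(Xv + Zv ^ e1) ^ a \<in> ?J" using im[OF ex] by (simp add: rhomD[OF rhom_sig] sig_X)
  then have x1: "Xv + Zv ^ e1 \<in> rad ?J" unfolding rad_def by auto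
  have "(Yv + Zv ^ e2) ^ b \<in> ?J" using im[OF ey] by (simp add: rhomD[OF rhom_sig] sig_Y)
  then have y1: "Yv + Zv ^ e2 \<in> rad ?J" unfolding rad_def by auto
  have "Zv ^ c \<in> ?J" using im[OF ez] by (simp add: rhomD[OF rhom_sig] sig_Z)
  then have z1: "Zv \<in> rad ?J" unfolding rad_def by auto
  have "Xv \<in> rad ?J"
    using idealD(6)[OF RJ x1 ideal_power[OF RJ z1, of e1]] e by simp
  then obtain n1 where n1: "Xv ^ n1 \<in> ?J" by (auto dest: rad_power_in)
  have "Yv \<in> rad ?J"
    using idealD(6)[OF RJ y1 ideal_power[OF RJ z1, of e2]] e by simp
  then obtain n2 where n2: "Yv ^ n2 \<in> ?J" by (auto dest: rad_power_in)
  have fm: "f \<in> mm" unfolding f_def using sig_mm[OF Fm e] by (rule idealD(3)[OF mm_ideal])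
  have gm: "g \<in> mm" unfolding g_def using sig_mm[OF Gm e] .
  have f0: "coeff (map_poly ev00 f) 0 = 0" by (rule ev_mm[OF fm])
  have g0: "coeff (map_poly ev00 g) 0 = 0" by (rule ev_mm[OF gm])
  have d: "degree f \<ge> 1"
  proof (rule ccontr)
    assume "\<not> degree f \<ge> 1"
    then have "degree f = 0" by simp
    then have "f = 1" using lcf by (metis degree_0_id one_pCons)
    then show False using f0 by (simp add: rhomD[OF rhom_ev00])
  qed
  show False
    by (rule norm_contra[OF lcf d _ _ f0 g0, of n1 n2]) (use n1 n2 in \<open>simp_all add: Xv_def Yv_def\<close>)
qed

lemma three_var:
  fixes F G :: "'a::field poly poly poly"
  assumes Fm: "F \<in> mm" and Gm: "G \<in> mm"
    and ex: "Xv ^ a \<in> ideal_gen {F, G}" and ey: "Yv ^ b \<in> ideal_gen {F, G}"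
    and ez: "Zv ^ c \<in> ideal_gen {F, G}"
  shows False
proof (cases "F = 0")
  case False show ?thesis by (rule three_var_nz[OF False Fm Gm ex ey ez])
next
  case F: True
  show ?thesis
  proof (cases "G = 0")
    case False
    have s: "{F, G} = {G, F}" by auto
    show ?thesis using three_var_nz[OF False Gm Fm] ex ey ez unfolding s by blast
  next
    case True
    then have "(Xv :: 'a poly poly poly) ^ a = 0" using ex F unfolding ideal2 by auto
    then show ?thesis by (simp add: Xv_def)
  qed
qed


definition radset :: "'a::comm_ring_1 set \<Rightarrow> bool" where
  "radset S \<longleftrightarrow> rad (ideal_gen S) \<subseteq> ideal_gen S"

definition Eset :: "'a::comm_ring_1 set \<Rightarrow> 'a set \<Rightarrow> 'a poly set" where
  "Eset L0 L1 = {p. coeff p 0 \<in> L0 \<and> (\<forall>j. coeff p j \<in> L1)}"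

lemma E_ideal:
  assumes L0: "is_ideal L0" and L1: "is_ideal L1" and sub: "L0 \<subseteq> L1"
  shows "is_ideal (Eset L0 L1)"
  unfolding is_ideal_def
proof (intro conjI ballI allI)
  show "0 \<in> Eset L0 L1" unfolding Eset_def using idealD(1)[OF L0] idealD(1)[OF L1] by simp
next
  fix a b assume "a \<in> Eset L0 L1" "b \<in> Eset L0 L1"
  then show "a + b \<in> Eset L0 L1" unfolding Eset_def using idealD(2)[OF L0] idealD(2)[OF L1] by simp
next
  fix r a assume a: "a \<in> Eset L0 L1"
  have "coeff (r * a) 0 \<in> L0" using a idealD(3)[OF L0] unfolding Eset_def by (simp add: coeff_mult_0)
  moreover have "coeff (r * a) j \<in> L1" for j
    unfolding coeff_mult using a idealD(3)[OF L1] unfolding Eset_def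
    by (intro ideal_sum[OF L1]) auto
  ultimately show "r * a \<in> Eset L0 L1" unfolding Eset_def by auto
qed

lemma coeff_mult_top:
  fixes p q :: "'a::comm_ring_1 poly"
  assumes "degree p \<le> a" "degree q \<le> b"
  shows "coeff (p * q) (a + b) = coeff p a * coeff q b"
proof -
  have "coeff (p * q) (a + b) = (\<Sum>i\<le>a + b. coeff p i * coeff q (a + b - i))" by (rule coeff_mult)
  also have "\<dots> = coeff p a * coeff q (a + b - a) + (\<Sum>i\<in>{..a + b} - {a}. coeff p i * coeff q (a + b - i))"
    by (rule sum.remove) auto
  also have "(\<Sum>i\<in>{..a + b} - {a}. coeff p i * coeff q (a + b - i)) = 0"
  proof (rule sum.neutral, intro ballI)
    fix i assume i: "i \<in> {..a + b} - {a}"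
    show "coeff p i * coeff q (a + b - i) = 0"
    proof (cases "i < a")
      case True then have "coeff q (a + b - i) = 0" using assms by (intro coeff_eq_0) auto
      then show ?thesis by simp
    next
      case False then have "coeff p i = 0" using assms i by (intro coeff_eq_0) auto
      then show ?thesis by simp
    qed
  qed
  finally show ?thesis by simp
qed

lemma coeff_pow_top:
  fixes p :: "'a::comm_ring_1 poly"
  assumes "degree p \<le> d"
  shows "coeff (p ^ n) (n * d) = coeff p d ^ n"
proof (induction n)
  case (Suc n)
  have "degree (p ^ n) \<le> n * d"
    using degree_power_le[of p n] assms by (metis le_trans mult.commute mult_le_mono2)
  then have "coeff (p * p ^ n) (d + n * d) = coeff p d * coeff (p ^ n) (n * d)"
    using assms by (rule coeff_mult_top[rotated])
  then show ?case using Suc by simp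
qed simp

lemma ELL_radical:
  assumes L: "is_ideal L" and rL: "rad L \<subseteq> L"
  shows "p ^ n \<in> Eset L L \<Longrightarrow> p \<in> Eset L L"
proof (induction "degree p" arbitrary: p rule: less_induct)
  case less
  have EI: "is_ideal (Eset L L)" by (rule E_ideal[OF L L]) simp
  define d where "d = degree p"
  define a where "a = coeff p d"
  have "coeff (p ^ n) (n * d) \<in> L" using less.prems unfolding Eset_def by auto
  then have "a ^ n \<in> L" unfolding a_def using coeff_pow_top[of p d n] d_def by simp
  then have aL: "a \<in> L" using rL unfolding rad_def by auto
  have ma: "monom a d \<in> Eset L L" unfolding Eset_def
    using aL idealD(1)[OF L] by (auto simp: coeff_monom)
  show ?case
  proof (cases "d = 0")
    case True
    then have "p = monom a d" unfolding a_def d_def by (simp add: monom_0 degree_0_id)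
    then show ?thesis using ma by simp
  next
    case False
    define p1 where "p1 = p - monom a d"
    have "degree p1 < degree p"
    proof -
      have "degree p1 \<le> d - 1"
      proof (rule degree_le, intro allI impI)
        fix j assume "d - 1 < j"
        then have "j \<ge> d" using False by simp
        then show "coeff p1 j = 0" unfolding p1_def a_def d_def
          by (cases "j = degree p") (auto simp: coeff_eq_0 coeff_monom)
      qed
      then show ?thesis using False d_def by simp
    qed
    moreover have "p1 ^ n \<in> Eset L L"
    proof (cases n)
      case 0 then show ?thesis using less.prems by simp
    next
      case (Suc m)
      have "p ^ n - p1 ^ n = (p - p1) * (\<Sum>i<Suc m. p ^ i * p1 ^ (m - i))"
        unfolding Suc by (rule diff_power_eq_sum)
      also have "p - p1 = monom a d" unfolding p1_def by simp
      finally have "p ^ n - p1 ^ n \<in> Eset L L" using idealD(4)[OF EI ma] by simp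
      then have "p ^ n - (p ^ n - p1 ^ n) \<in> Eset L L" by (rule idealD(6)[OF EI less.prems])
      then show ?thesis by simp
    qed
    ultimately have "p1 \<in> Eset L L" using less.hyps by blast
    then have "p1 + monom a d \<in> Eset L L" using idealD(2)[OF EI _ ma] by simp
    then show ?thesis unfolding p1_def by simp
  qed
qed

lemma E_radical:
  assumes L0: "is_ideal L0" and L1: "is_ideal L1" and sub: "L0 \<subseteq> L1"
    and r0: "rad L0 \<subseteq> L0" and r1: "rad L1 \<subseteq> L1"
  shows "rad (Eset L0 L1) \<subseteq> Eset L0 L1"
proof
  fix p assume "p \<in> rad (Eset L0 L1)"
  then obtain n where n: "p ^ n \<in> Eset L0 L1" unfolding rad_def by auto
  then have "coeff p 0 ^ n \<in> L0" unfolding Eset_def by (simp add: coeff_0_power)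
  then have c0: "coeff p 0 \<in> L0" using r0 unfolding rad_def by auto
  have "p ^ n \<in> Eset L1 L1" using n unfolding Eset_def by auto
  then have "p \<in> Eset L1 L1" by (rule ELL_radical[OF L1 r1])
  then show "p \<in> Eset L0 L1" using c0 unfolding Eset_def by auto
qed

lemma gen_E:
  fixes A B :: "'a::comm_ring_1 set"
  shows "ideal_gen ((\<lambda>g. [:g:]) ` A \<union> (\<lambda>g. [:0, g:]) ` B) = Eset (ideal_gen A) (ideal_gen (A \<union> B))"
    (is "ideal_gen ?G = ?E")
proof
  have sub: "ideal_gen A \<subseteq> ideal_gen (A \<union> B)" by (rule ideal_gen_mono) auto
  have EI: "is_ideal ?E" by (rule E_ideal[OF ideal_gen_ideal ideal_gen_ideal sub])
  have "?G \<subseteq> ?E"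
  proof
    fix x assume "x \<in> ?G"
    then consider a where "a \<in> A" "x = [:a:]" | b where "b \<in> B" "x = [:0, b:]" by auto
    then show "x \<in> ?E"
    proof cases
      case 1
      then have "a \<in> ideal_gen A" using ideal_gen_sub[of A] by auto
      then show ?thesis using 1 sub idealD(1)[OF ideal_gen_ideal] unfolding Eset_def
        by (auto simp: coeff_pCons split: nat.split)
    next
      case 2
      then have "b \<in> ideal_gen (A \<union> B)" using ideal_gen_sub[of "A \<union> B"] by auto
      then show ?thesis using 2 idealD(1)[OF ideal_gen_ideal] unfolding Eset_def
        by (auto simp: coeff_pCons split: nat.split)
    qed
  qed
  then show "ideal_gen ?G \<subseteq> ?E" by (rule ideal_gen_least[OF EI])
next
  let ?J = "ideal_gen ?G"
  have JI: "is_ideal ?J" by (rule ideal_gen_ideal)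
  have h1: "[:a:] \<in> ?J" if "a \<in> ideal_gen A" for a
  proof -
    have "[:a:] \<in> ideal_gen ((\<lambda>g. [:g:]) ` A)" by (rule rhom_image[OF rhom_const that])
    also have "\<dots> \<subseteq> ?J" by (rule ideal_gen_mono) auto
    finally show ?thesis .
  qed
  have h2: "[:0, c:] \<in> ?J" if "c \<in> ideal_gen (A \<union> B)" for c
  proof -
    let ?S = "{c. [:0, c:] \<in> ?J}"
    have "is_ideal ?S" unfolding is_ideal_def
    proof (intro conjI ballI allI)
      show "0 \<in> ?S" using idealD(1)[OF JI] by simp
      fix x y assume "x \<in> ?S" "y \<in> ?S"
      then have "[:0, x:] + [:0, y:] \<in> ?J" using idealD(2)[OF JI, of "[:0, x:]" "[:0, y:]"] by simp
      then show "x + y \<in> ?S" by simp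
    next
      fix r x assume "x \<in> ?S"
      then have "[:r:] * [:0, x:] \<in> ?J" using idealD(3)[OF JI, of "[:0, x:]" "[:r:]"] by simp
      moreover have "[:r:] * [:0, x:] = [:0, r * x:]" by simp
      ultimately show "r * x \<in> ?S" by (simp add: mult.commute)
    qed
    moreover have "A \<union> B \<subseteq> ?S"
    proof
      fix x assume "x \<in> A \<union> B"
      then show "x \<in> ?S"
      proof
        assume "x \<in> A"
        then have "[:x:] \<in> ?J" using ideal_gen_sub[of ?G] by auto
        then have "[:0, 1:] * [:x:] \<in> ?J" using idealD(3)[OF JI] by blast
        then show ?thesis by simp
      next
        assume "x \<in> B"
        then show ?thesis using ideal_gen_sub[of ?G] by auto
      qed
    qed
    ultimately show ?thesis using ideal_gen_least that by blast
  qed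
  have h3: "(\<forall>j. coeff q j \<in> ideal_gen (A \<union> B)) \<longrightarrow> [:0, 1:] * q \<in> ?J" for q
  proof (induction q rule: pCons_induct)
    case 0 then show ?case using idealD(1)[OF JI] by simp
  next
    case (pCons c q)
    show ?case
    proof
      assume "\<forall>j. coeff (pCons c q) j \<in> ideal_gen (A \<union> B)"
      then have c: "c \<in> ideal_gen (A \<union> B)" and q: "\<forall>j. coeff q j \<in> ideal_gen (A \<union> B)"
        by (metis coeff_pCons_0, metis coeff_pCons_Suc)
      have "[:0, 1:] * q \<in> ?J" using pCons.IH q by blast
      then have "[:0, 1:] * ([:0, 1:] * q) \<in> ?J" using idealD(3)[OF JI] by blast
      then have "[:0, c:] + [:0, 1:] * ([:0, 1:] * q) \<in> ?J" using idealD(2)[OF JI h2[OF c]] by blast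
      moreover have "[:0, c:] + [:0, 1:] * ([:0, 1:] * q) = [:0, 1:] * pCons c q" by simp
      ultimately show "[:0, 1:] * pCons c q \<in> ?J" by simp
    qed
  qed
  show "?E \<subseteq> ?J"
  proof
    fix p assume p: "p \<in> ?E"
    obtain a q where pq: "p = pCons a q" by (cases p) auto
    have a: "a \<in> ideal_gen A" using p pq unfolding Eset_def by auto
    have q: "\<forall>j. coeff q j \<in> ideal_gen (A \<union> B)" using p pq unfolding Eset_def
      by (metis (no_types, lifting) coeff_pCons_Suc mem_Collect_eq)
    have "[:a:] + [:0, 1:] * q \<in> ?J" using idealD(2)[OF JI h1[OF a]] h3 q by blast
    moreover have "[:a:] + [:0, 1:] * q = p" unfolding pq by simp
    ultimately show "p \<in> ?J" by simp
  qed
qed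

lemma lift_radical:
  fixes A B :: "'a::comm_ring_1 set"
  assumes rA: "radset A" and rAB: "radset (A \<union> B)"
    and S: "S = (\<lambda>g. [:g:]) ` A \<union> (\<lambda>g. [:0, g:]) ` B"
  shows "radset S"
  unfolding radset_def S gen_E
  by (rule E_radical[OF ideal_gen_ideal ideal_gen_ideal ideal_gen_mono])
    (use rA rAB in \<open>auto simp: radset_def\<close>)

lemma radset_field: "radset (S :: 'a::field set)"
  unfolding radset_def
proof
  fix x assume "x \<in> rad (ideal_gen S)"
  then obtain n where n: "x ^ n \<in> ideal_gen S" unfolding rad_def by auto
  show "x \<in> ideal_gen S"
  proof (cases "S \<subseteq> {0}")
    case True
    have "is_ideal {0::'a}" unfolding is_ideal_def by auto
    then have "ideal_gen S \<subseteq> {0}" using True ideal_gen_least by blast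
    then have "x ^ n = 0" using n by auto
    then have "x = 0" by simp
    then show ?thesis using idealD(1)[OF ideal_gen_ideal] by simp
  next
    case False
    then obtain s where s: "s \<in> S" "s \<noteq> 0" by auto
    then have "inverse s * s \<in> ideal_gen S" using ideal_gen_sub idealD(3)[OF ideal_gen_ideal] by blast
    then have "1 \<in> ideal_gen S" using s by simp
    then have "x * 1 \<in> ideal_gen S" using idealD(3)[OF ideal_gen_ideal] by blast
    then show ?thesis by simp
  qed
qed

lemma radset_eq: "radset T \<Longrightarrow> S = T \<Longrightarrow> radset S" by simp


abbreviation u1 :: "'a::field poly" where "u1 \<equiv> [:0, 1:]"
abbreviation v1 :: "'a::field poly poly" where "v1 \<equiv> [:u1:]"
abbreviation v2 :: "'a::field poly poly" where "v2 \<equiv> [:0, 1:]"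
abbreviation w1 :: "'a::field poly poly poly" where "w1 \<equiv> [:v1:]"
abbreviation w2 :: "'a::field poly poly poly" where "w2 \<equiv> [:v2:]"
abbreviation w3 :: "'a::field poly poly poly" where "w3 \<equiv> [:0, 1:]"
abbreviation y1 :: "'a::field poly poly poly poly" where "y1 \<equiv> [:w1:]"
abbreviation y2 :: "'a::field poly poly poly poly" where "y2 \<equiv> [:w2:]"
abbreviation y3 :: "'a::field poly poly poly poly" where "y3 \<equiv> [:w3:]"
abbreviation y4 :: "'a::field poly poly poly poly" where "y4 \<equiv> [:0, 1:]"

lemma r1_0: "radset ({} :: 'a::field poly set)"
  by (rule lift_radical[where A="{}" and B="{}"], rule radset_field, rule radset_field, force)

lemma r1_u: "radset {u1 :: 'a::field poly}"
  by (rule lift_radical[where A="{}" and B="{1}"], rule radset_field, rule radset_field, force)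

lemma r1_1: "radset {1 :: 'a::field poly}"
  by (rule lift_radical[where A="{1}" and B="{}"], rule radset_field, rule radset_field, force simp: pCons_one)

lemma r1_u1: "radset {u1 :: 'a::field poly, 1}"
  by (rule lift_radical[where A="{1}" and B="{1}"], rule radset_field, rule radset_field, force simp: pCons_one)

lemma r2_0: "radset ({} :: 'a::field poly poly set)"
  by (rule lift_radical[where A="{}" and B="{}"], (rule radset_eq[OF r1_0], force), (rule radset_eq[OF r1_0], force), force)

lemma r2_v1: "radset {v1 :: 'a::field poly poly}"
  by (rule lift_radical[where A="{u1}" and B="{}"], (rule radset_eq[OF r1_u], force), (rule radset_eq[OF r1_u], force), force)

lemma r2_v1v2: "radset {v1 :: 'a::field poly poly, v2}"
  by (rule lift_radical[where A="{u1}" and B="{1}"], (rule radset_eq[OF r1_u], force), (rule radset_eq[OF r1_u1], force), force)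

lemma r2_v2: "radset {v2 :: 'a::field poly poly}"
  by (rule lift_radical[where A="{}" and B="{1}"], (rule radset_eq[OF r1_0], force), (rule radset_eq[OF r1_1], force), force)

lemma r2_v1v21: "radset {v1 :: 'a::field poly poly, v2, 1}"
  by (rule lift_radical[where A="{u1, 1}" and B="{1}"], (rule radset_eq[OF r1_u1], force), (rule radset_eq[OF r1_u1], force), force simp: pCons_one)

lemma r3_a: "radset {w1 * w3 :: 'a::field poly poly poly}"
  by (rule lift_radical[where A="{}" and B="{v1}"], (rule radset_eq[OF r2_0], force), (rule radset_eq[OF r2_v1], force), force)

lemma r3_b: "radset {w1 * w3 :: 'a::field poly poly poly, w1, w2}"
  by (rule lift_radical[where A="{v1, v2}" and B="{v1}"], (rule radset_eq[OF r2_v1v2], force), (rule radset_eq[OF r2_v1v2], force), force)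

lemma r3_c: "radset {w1 * w3 :: 'a::field poly poly poly, w2, w3}"
  by (rule lift_radical[where A="{v2}" and B="{v1, 1}"], (rule radset_eq[OF r2_v2], force), (rule radset_eq[OF r2_v1v21], force), force simp: pCons_one)

lemma r3_d: "radset {w1 * w3 :: 'a::field poly poly poly, w2, w3, w1, w2}"
  by (rule lift_radical[where A="{v2, v1}" and B="{v1, 1}"], (rule radset_eq[OF r2_v1v2], force), (rule radset_eq[OF r2_v1v21], force), force simp: pCons_one)

lemma r4_a: "radset {y1 * y3 :: 'a::field poly poly poly poly, y1 * y4, y2 * y4}"
  by (rule lift_radical[where A="{w1 * w3}" and B="{w1, w2}"], (rule radset_eq[OF r3_a], force), (rule radset_eq[OF r3_b], force), force)

lemma r4_b: "radset {y1 * y3 :: 'a::field poly poly poly poly, y1 * y4, y2 * y4, y2, y3}"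
  by (rule lift_radical[where A="{w1 * w3, w2, w3}" and B="{w1, w2}"], (rule radset_eq[OF r3_c], force), (rule radset_eq[OF r3_d], force), force)

lemma r5: "radset {X1 * X3 :: 'a::field mpoly5, X1 * X4, X2 * X4, X2 * X5, X3 * X5}"
  unfolding X1_def X2_def X3_def X4_def X5_def
  by (rule lift_radical[where A="{y1 * y3, y1 * y4, y2 * y4}" and B="{y2, y3}"], (rule radset_eq[OF r4_a], force), (rule radset_eq[OF r4_b], force), force)


definition psi :: "'a::field mpoly5 \<Rightarrow> 'a poly poly poly" where
  "psi p = poly (poly p 1) 1"

lemma rhom_psi: "rhom psi"
proof -
  have "psi = (\<lambda>q. poly q 1) \<circ> (\<lambda>p. poly p 1)" unfolding psi_def by auto
  then show ?thesis by (metis rhom_comp rhom_poly)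
qed

lemma psi_X: "psi X1 = Xv" "psi X2 = Yv" "psi X3 = Zv" "psi X4 = 1" "psi X5 = 1"
  by (simp_all add: psi_def X1_def X2_def X3_def X4_def X5_def Xv_def Yv_def Zv_def)

lemma ideal_gen_insert0: "ideal_gen (insert 0 S) = ideal_gen S"
proof
  show "ideal_gen (insert 0 S) \<subseteq> ideal_gen S"
    by (rule ideal_gen_least[OF ideal_gen_ideal]) (use ideal_gen_sub idealD(1)[OF ideal_gen_ideal] in auto)
  show "ideal_gen S \<subseteq> ideal_gen (insert 0 S)" by (rule ideal_gen_mono) auto
qed

lemma lower:
  fixes f g :: "'a::field mpoly5"
  assumes R: "rad (ideal_gen {f, g}) = ideal_gen {X1 * X3, X1 * X4, X2 * X4, X2 * X5, X3 * X5}"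
  shows False
proof -
  let ?G = "{X1 * X3, X1 * X4, X2 * X4, X2 * X5, X3 * X5} :: 'a mpoly5 set"
  let ?I = "ideal_gen ?G"
  have fg: "f \<in> ?I" "g \<in> ?I"
    using rad_sub[OF ideal_gen_ideal, of "{f, g}"] ideal_gen_sub[of "{f, g}"] R by auto
  have pw: "\<exists>n. m ^ n \<in> ideal_gen {f, g}" if "m \<in> ?G" for m
  proof -
    have "m \<in> ?I" using that ideal_gen_sub[of ?G] by (rule subsetD[rotated])
    then have "m \<in> rad (ideal_gen {f, g})" using R by simp
    then show ?thesis unfolding rad_def by auto
  qed
  obtain n1 where n1: "(X1 * X4) ^ n1 \<in> ideal_gen {f, g}" using pw by auto
  obtain n2 where n2: "(X2 * X4) ^ n2 \<in> ideal_gen {f, g}" using pw by auto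
  obtain n3 where n3: "(X3 * X5) ^ n3 \<in> ideal_gen {f, g}" using pw by auto
  note ps = rhomD[OF rhom_psi]
  have ex: "Xv ^ n1 \<in> ideal_gen {psi f, psi g}"
    using rhom_image2[OF rhom_psi n1] by (simp add: ps psi_X)
  have ey: "Yv ^ n2 \<in> ideal_gen {psi f, psi g}"
    using rhom_image2[OF rhom_psi n2] by (simp add: ps psi_X)
  have ez: "Zv ^ n3 \<in> ideal_gen {psi f, psi g}"
    using rhom_image2[OF rhom_psi n3] by (simp add: ps psi_X)
  have Gm: "psi ` ?G \<subseteq> (mm :: 'a poly poly poly set)"
    using in_mm idealD(3)[OF mm_ideal] by (auto simp: ps psi_X)
  have "psi p \<in> mm" if "p \<in> ?I" for p
    using rhom_image[OF rhom_psi that] ideal_gen_least[OF mm_ideal Gm] by blast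
  then show False using three_var[OF _ _ ex ey ez] fg by blast
qed

theorem mainTheorem4:
  fixes I :: "'a::field mpoly5 set"
  assumes "I = ideal_gen {X1 * X3, X1 * X4, X2 * X4, X2 * X5, X3 * X5}"
  shows "I = rad (ideal_gen {X1 * X3, X1 * X4 + X2 * X5, X2 * X4 + X3 * X5})
         \<and> ara I = 3"
proof -
  let ?G = "{X1 * X3, X1 * X4, X2 * X4, X2 * X5, X3 * X5} :: 'a mpoly5 set"
  let ?H = "{X1 * X3, X1 * X4 + X2 * X5, X2 * X4 + X3 * X5} :: 'a mpoly5 set"
  let ?J = "ideal_gen ?H"
  have II: "is_ideal I" using assms ideal_gen_ideal by simp
  have JI: "is_ideal ?J" by (rule ideal_gen_ideal)
  have radI: "rad I = I" using r5 rad_sub[OF II] assms unfolding radset_def by auto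
  have GI: "?G \<subseteq> I" unfolding assms by (rule ideal_gen_sub)
  have HI: "?H \<subseteq> I"
  proof -
    have "X1 * X4 + X2 * X5 \<in> I" using GI idealD(2)[OF II, of "X1 * X4" "X2 * X5"] by simp
    moreover have "X2 * X4 + X3 * X5 \<in> I" using GI idealD(2)[OF II, of "X2 * X4" "X3 * X5"] by simp
    ultimately show ?thesis using GI by simp
  qed
  have JsubI: "?J \<subseteq> I" by (rule ideal_gen_least[OF II HI])
  have HJ: "?H \<subseteq> ?J" by (rule ideal_gen_sub)
  have a: "X1 * X3 \<in> ?J" and b: "X1 * X4 + X2 * X5 \<in> ?J" and c: "X2 * X4 + X3 * X5 \<in> ?J"
    using HJ by auto
  have inJ: "r * x + s * y - t * z \<in> ?J" if "x \<in> ?J" "y \<in> ?J" "z \<in> ?J" for r s t x y z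
    using idealD[OF JI] that by metis
  have "(X1 * X4) ^ 2 = X5 ^ 2 * (X1 * X3) + (X1 * X4) * (X1 * X4 + X2 * X5) - (X1 * X5) * (X2 * X4 + X3 * X5)"
    by (simp add: algebra_simps power2_eq_square)
  then have c14: "(X1 * X4) ^ 2 \<in> ?J" using inJ[OF a b c] by metis
  have "(X2 * X4) ^ 2 = X4 ^ 2 * (X1 * X3) - (X3 * X4) * (X1 * X4 + X2 * X5) + (X2 * X4) * (X2 * X4 + X3 * X5)"
    by (simp add: algebra_simps power2_eq_square)
  also have "\<dots> = X4 ^ 2 * (X1 * X3) + (X2 * X4) * (X2 * X4 + X3 * X5) - (X3 * X4) * (X1 * X4 + X2 * X5)"
    by simp
  finally have c24: "(X2 * X4) ^ 2 \<in> ?J" using inJ[OF a c b] by metis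
  have "(X2 * X5) ^ 2 = X5 ^ 2 * (X1 * X3) + (X2 * X5) * (X1 * X4 + X2 * X5) - (X1 * X5) * (X2 * X4 + X3 * X5)"
    by (simp add: algebra_simps power2_eq_square)
  then have c25: "(X2 * X5) ^ 2 \<in> ?J" using inJ[OF a b c] by metis
  have "(X3 * X5) ^ 2 = X4 ^ 2 * (X1 * X3) + (X3 * X5) * (X2 * X4 + X3 * X5) - (X3 * X4) * (X1 * X4 + X2 * X5)"
    by (simp add: algebra_simps power2_eq_square)
  then have c35: "(X3 * X5) ^ 2 \<in> ?J" using inJ[OF a c b] by metis
  have "?G \<subseteq> rad ?J"
    using a c14 c24 c25 c35 rad_sub[OF JI] unfolding rad_def by blast
  then have "ideal_gen ?G \<subseteq> rad ?J" by (rule ideal_gen_least[OF rad_ideal[OF JI]])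
  then have IJ: "I \<subseteq> rad ?J" using assms by simp
  have "rad ?J \<subseteq> rad I" by (rule rad_mono[OF JsubI])
  then have eq1: "I = rad ?J" using IJ radI by auto
  have P3: "\<exists>gs. length gs = 3 \<and> rad (ideal_gen (set gs)) = rad I"
    by (rule exI[of _ "[X1 * X3, X1 * X4 + X2 * X5, X2 * X4 + X3 * X5]"]) (simp add: radI eq1[symmetric])
  have ge: "3 \<le> m" if "\<exists>gs. length gs = m \<and> rad (ideal_gen (set gs)) = rad I" for m
  proof (rule ccontr)
    assume "\<not> 3 \<le> m"
    then have m: "m < 3" by simp
    from that obtain gs where gs: "length gs = m" "rad (ideal_gen (set gs)) = rad I" by auto
    have "\<exists>f g. ideal_gen (set gs) = ideal_gen {f, g}"
    proof (cases gs)
      case Nil then show ?thesis by (intro exI[of _ 0]) (simp add: ideal_gen_insert0)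
    next
      case (Cons a r)
      show ?thesis
      proof (cases r)
        case Nil then show ?thesis using Cons
          by (intro exI[of _ a] exI[of _ 0]) (simp add: ideal_gen_insert0 insert_commute)
      next
        case (Cons b r')
        then have "r' = []" using gs(1) m \<open>gs = a # r\<close> by auto
        then show ?thesis using Cons \<open>gs = a # r\<close> by auto
      qed
    qed
    then obtain f g where fg: "ideal_gen (set gs) = ideal_gen {f, g}" by auto
    have "rad (ideal_gen {f, g}) = ideal_gen {X1 * X3, X1 * X4, X2 * X4, X2 * X5, X3 * X5}"
      using gs(2) fg radI assms by simp
    then show False by (rule lower)
  qed
  have "ara I = 3" unfolding ara_def
    by (rule Least_equality) (use P3 ge in auto)
  then show ?thesis using eq1 by simp
qed


end
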